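(* Let $X,Y$ be polynomial orbit-finite sets and $R\subseteq X\times Y$ a finitely supported binary relation such that for every $x\in X$ the set $\{y: (x,y)\in R\}$ is nonempty. Then there is a finitely supported function $f:X\to Y$ such that $(x,f(x))\in R$ for all $x\in X$.
   Context: Atoms $\mathbb A$ are a countably infinite set; atom automorphisms are bijections of $\mathbb A$. Polynomial orbit-finite sets are built from $\mathbb A$ and singletons by finite products and disjoint unions with the natural action; automorphisms act on subsets elementwise and on functions by $\pi(f)=\pi\circ f\circ\pi^{-1}$. An object is finitely supported if there is a finite tuple $\bar a$ of atoms such that every automorphism fixing $\bar a$ pointwise fixes the object. *)

theory Defs
  imports Main
begin

text \<open>Atoms are modelled by the countably infinite type nat; atom automorphisms
are bijections nat \<Rightarrow> nat.\<close>

text \<open>Syntax of polynomial orbit-finite sets: the atoms, a singleton,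
binary products and binary disjoint unions.\<close>
datatype pof = PAtoms | PUnit | PProd pof pof | PSum pof pof

datatype val = VAtom nat | VUnit | VPair val val | VInl val | VInr val

fun elems :: "pof \<Rightarrow> val set" where
  "elems PAtoms = range VAtom"
| "elems PUnit = {VUnit}"
| "elems (PProd A B) = {VPair x y | x y. x \<in> elems A \<and> y \<in> elems B}"
| "elems (PSum A B) = VInl ` elems A \<union> VInr ` elems B"

fun act :: "(nat \<Rightarrow> nat) \<Rightarrow> val \<Rightarrow> val" where
  "act \<pi> (VAtom a) = VAtom (\<pi> a)"
| "act \<pi> VUnit = VUnit"
| "act \<pi> (VPair x y) = VPair (act \<pi> x) (act \<pi> y)"
| "act \<pi> (VInl x) = VInl (act \<pi> x)"
| "act \<pi> (VInr x) = VInr (act \<pi> x)"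

definition act_set :: "(nat \<Rightarrow> nat) \<Rightarrow> (val \<times> val) set \<Rightarrow> (val \<times> val) set" where
  "act_set \<pi> R = (\<lambda>(x, y). (act \<pi> x, act \<pi> y)) ` R"

definition supports :: "nat set \<Rightarrow> (val \<times> val) set \<Rightarrow> bool" where
  "supports S R \<longleftrightarrow> (\<forall>\<pi>. bij \<pi> \<and> (\<forall>a\<in>S. \<pi> a = a) \<longrightarrow> act_set \<pi> R = R)"

definition fin_supp :: "(val \<times> val) set \<Rightarrow> bool" where
  "fin_supp R \<longleftrightarrow> (\<exists>S. finite S \<and> supports S R)"

text \<open>A function X \<rightarrow> Y is identified with its graph; it is finitely supported
iff its graph is (this is the action \<pi>(f) = \<pi> \<circ> f \<circ> \<pi>\<inverse>).\<close>
definition graph_on :: "val set \<Rightarrow> (val \<Rightarrow> val) \<Rightarrow> (val \<times> val) set" where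
  "graph_on X f = {(x, f x) | x. x \<in> X}"

end

theory Submission
  imports Defs "HOL-Library.Countable"
begin

instance val :: countable by countable_datatype

fun atl :: "val \<Rightarrow> nat list" where
  "atl (VAtom a) = [a]"
| "atl VUnit = []"
| "atl (VPair x y) = atl x @ atl y"
| "atl (VInl x) = atl x"
| "atl (VInr x) = atl x"

fun sz :: "pof \<Rightarrow> nat" where
  "sz PAtoms = 1" | "sz PUnit = 0" | "sz (PProd A B) = sz A + sz B"
| "sz (PSum A B) = max (sz A) (sz B)"

lemma len_atl: "x \<in> elems X \<Longrightarrow> length (atl x) \<le> sz X"
  by (induction X arbitrary: x) (auto, fastforce+)

lemma card_atl: "x \<in> elems X \<Longrightarrow> card (set (atl x)) \<le> sz X"
  using len_atl card_length le_trans by blast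

lemma atl_act: "atl (act \<pi> x) = map \<pi> (atl x)"
  by (induction x) auto

lemma act_cong: "(\<And>a. a \<in> set (atl y) \<Longrightarrow> g a = h a) \<Longrightarrow> act g y = act h y"
  by (induction y) auto

lemma act_comp: "act g (act h y) = act (g \<circ> h) y"
  by (induction y) auto

lemma act_id: "act id y = y"
  by (induction y) auto

lemma act_fix: "(\<And>a. a \<in> set (atl y) \<Longrightarrow> g a = a) \<Longrightarrow> act g y = y"
  using act_cong[of y g id] act_id by simp

lemma act_inj: "inj_on g (set (atl x) \<union> set (atl y)) \<Longrightarrow> act g x = act g y \<Longrightarrow> x = y"
proof (induction x arbitrary: y)
  case (VAtom a) then show ?case by (cases y) (auto dest: inj_onD)
next
  case VUnit then show ?case by (cases y) auto
next
  case (VPair x1 x2)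
  then obtain y1 y2 where y: "y = VPair y1 y2" by (cases y) auto
  have "inj_on g (set (atl x1) \<union> set (atl y1))" "inj_on g (set (atl x2) \<union> set (atl y2))"
    using VPair.prems(1) y by (auto intro: inj_on_subset)
  then show ?case using VPair y by auto
next
  case (VInl x) then show ?case by (cases y) auto
next
  case (VInr x) then show ?case by (cases y) auto
qed

lemma act_elems: "x \<in> elems X \<Longrightarrow> act \<pi> x \<in> elems X"
  by (induction X arbitrary: x) auto


lemma R_inv:
  assumes "supports S R" "bij \<pi>" "\<forall>a\<in>S. \<pi> a = a" "(x, y) \<in> R"
  shows "(act \<pi> x, act \<pi> y) \<in> R"
proof -
  have "act_set \<pi> R = R" using assms unfolding supports_def by blast
  moreover have "(act \<pi> x, act \<pi> y) \<in> act_set \<pi> R" using assms(4) unfolding act_set_def by force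
  ultimately show ?thesis by simp
qed

lemma inv_fix: "bij \<pi> \<Longrightarrow> \<pi> a = a \<Longrightarrow> inv \<pi> a = a"
  by (metis bij_def inv_f_f)

lemma act_inv1: "bij \<pi> \<Longrightarrow> act (inv \<pi>) (act \<pi> x) = x"
  by (simp add: act_comp act_id bij_is_inj)

lemma act_inv2: "bij \<pi> \<Longrightarrow> act \<pi> (act (inv \<pi>) x) = x"
  proof -
  assume "bij \<pi>"
  then have "\<pi> \<circ> inv \<pi> = id" by (meson bij_is_surj surj_iff)
  then show ?thesis by (simp add: act_comp act_id)
qed

definition sw :: "nat \<Rightarrow> nat \<Rightarrow> nat \<Rightarrow> nat" where
  "sw a b c = (if c = a then b else if c = b then a else c)"

lemma bij_sw: "bij (sw a b)"
proof -
  have "sw a b \<circ> sw a b = id" by (auto simp: sw_def fun_eq_iff)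
  then show ?thesis using o_bij by blast
qed

lemma rename:
  assumes supp: "supports S R" and fA: "finite A" and AD: "A \<inter> D = {}" and SD: "S \<subseteq> D"
    and xD: "set (atl x) \<subseteq> D"
  shows "(x, y) \<in> R \<Longrightarrow> card (set (atl y) - (D \<union> A)) \<le> card (A - set (atl y))
     \<Longrightarrow> \<exists>y'. (x, y') \<in> R \<and> set (atl y') \<subseteq> D \<union> A"
proof (induction "card (set (atl y) - (D \<union> A))" arbitrary: y)
  case 0
  then have "set (atl y) \<subseteq> D \<union> A" by auto
  then show ?case using 0 by blast
next
  case (Suc n)
  then obtain b where b: "b \<in> set (atl y) - (D \<union> A)"
    by (metis card.empty ex_in_conv nat.distinct(1))
  have "card (A - set (atl y)) > 0" using Suc by linarith
  then obtain a where a: "a \<in> A - set (atl y)"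
    by (metis card.empty ex_in_conv less_irrefl)
  define \<pi> where "\<pi> = sw a b"
  have ab: "a \<noteq> b" using a b by auto
  have fixD: "\<forall>c\<in>D. \<pi> c = c" using a b AD by (auto simp: \<pi>_def sw_def)
  have x: "act \<pi> x = x" using xD fixD by (intro act_fix) auto
  have R: "(x, act \<pi> y) \<in> R"
    using R_inv[OF supp, of \<pi> x y] Suc.prems(1) fixD SD x bij_sw by (auto simp: \<pi>_def)
  have set: "set (atl (act \<pi> y)) = insert a (set (atl y) - {b})"
    using a b ab unfolding atl_act set_map \<pi>_def sw_def by (auto simp: image_iff)
  have e1: "set (atl (act \<pi> y)) - (D \<union> A) = (set (atl y) - (D \<union> A)) - {b}"
    using set a by auto
  have e2: "A - set (atl (act \<pi> y)) = (A - set (atl y)) - {a}"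
    using set b by auto
  have fin: "finite (set (atl y) - (D \<union> A))" by simp
  have c1: "n = card (set (atl (act \<pi> y)) - (D \<union> A))"
    using e1 Suc.hyps(2) b fin by (simp add: card_Diff_singleton)
  have c2: "card (A - set (atl (act \<pi> y))) = card (A - set (atl y)) - 1"
    using e2 a fA by (simp add: card_Diff_singleton)
  have "card (set (atl (act \<pi> y)) - (D \<union> A)) \<le> card (A - set (atl (act \<pi> y)))"
    using c1 c2 Suc.prems(2) Suc.hyps(2) by linarith
  then show ?case using Suc.hyps(1)[OF c1 R] by blast
qed


definition code :: "val \<Rightarrow> nat \<Rightarrow> nat" where
  "code x a = (LEAST i. i < length (atl x) \<and> atl x ! i = a)"

lemma code: "a \<in> set (atl x) \<Longrightarrow> atl x ! code x a = a"
  unfolding code_def by (rule LeastI2_ex) (auto simp: in_set_conv_nth)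

lemma code_act: "inj \<pi> \<Longrightarrow> code (act \<pi> x) (\<pi> a) = code x a"
  unfolding code_def atl_act
  by (rule arg_cong[where f=Least]) (auto simp: fun_eq_iff inj_eq)

definition gT :: "nat set \<Rightarrow> val \<Rightarrow> nat \<Rightarrow> nat" where
  "gT T x a = (if a \<in> T then 2*a else 2 * code x a + 1)"

definition enc :: "nat set \<Rightarrow> val \<Rightarrow> val \<Rightarrow> nat" where
  "enc T x y = to_nat (act (gT T x) y)"

definition CC :: "(val \<times> val) set \<Rightarrow> nat set \<Rightarrow> val \<Rightarrow> val set" where
  "CC R T x = {y. (x, y) \<in> R \<and> set (atl y) \<subseteq> set (atl x) \<union> T}"

definition PP :: "(val \<times> val) set \<Rightarrow> nat set \<Rightarrow> val \<Rightarrow> val \<Rightarrow> bool" where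
  "PP R T x y = (y \<in> CC R T x \<and> (\<forall>z\<in>CC R T x. enc T x y \<le> enc T x z))"

definition fsel :: "(val \<times> val) set \<Rightarrow> nat set \<Rightarrow> val \<Rightarrow> val" where
  "fsel R T x = (THE y. PP R T x y)"

lemma gT_inj: "inj_on (gT T x) (set (atl x) \<union> T)"
proof (rule inj_onI)
  fix a b assume a: "a \<in> set (atl x) \<union> T" and b: "b \<in> set (atl x) \<union> T" and e: "gT T x a = gT T x b"
  show "a = b"
  proof (cases "a \<in> T"; cases "b \<in> T")
    assume "a \<notin> T" "b \<notin> T"
    then have "code x a = code x b" using e by (simp add: gT_def)
    then show ?thesis using code[of a x] code[of b x] a b \<open>a \<notin> T\<close> \<open>b \<notin> T\<close> by (metis Un_iff)
  next
    assume "a \<in> T" "b \<notin> T"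
    then have "even (gT T x a)" "odd (gT T x b)" by (auto simp: gT_def)
    then show ?thesis using e by simp
  next
    assume "a \<notin> T" "b \<in> T"
    then have "odd (gT T x a)" "even (gT T x b)" by (auto simp: gT_def)
    then show ?thesis using e by simp
  qed (use e in \<open>simp add: gT_def\<close>)
qed

lemma PP_unique:
  assumes "CC R T x \<noteq> {}"
  shows "\<exists>!y. PP R T x y"
proof -
  obtain k where "k \<in> CC R T x" using assms by blast
  then obtain y where y: "y \<in> CC R T x" "\<forall>z. z \<in> CC R T x \<longrightarrow> enc T x y \<le> enc T x z"
    using ex_has_least_nat[of "\<lambda>z. z \<in> CC R T x" k "enc T x"] by blast
  have "PP R T x y" using y unfolding PP_def by blast
  moreover have "y2 = y" if "PP R T x y2" for y2
  proof -
    have "enc T x y2 = enc T x y" using that y unfolding PP_def by (meson le_antisym)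
    then have "act (gT T x) y2 = act (gT T x) y" unfolding enc_def by simp
    moreover have "inj_on (gT T x) (set (atl y2) \<union> set (atl y))"
      using that y by (auto simp: PP_def CC_def intro: inj_on_subset[OF gT_inj])
    ultimately show ?thesis using act_inj by blast
  qed
  ultimately show ?thesis by blast
qed

lemma fsel_PP: "CC R T x \<noteq> {} \<Longrightarrow> PP R T x (fsel R T x)"
  unfolding fsel_def using PP_unique theI' by metis

lemma equivar:
  assumes supp: "supports S R" and ST: "S \<subseteq> T" and bij: "bij \<pi>" and fixT: "\<forall>t\<in>T. \<pi> t = t"
    and ne: "CC R T x \<noteq> {}"
  shows "fsel R T (act \<pi> x) = act \<pi> (fsel R T x)"
proof -
  have inj: "inj \<pi>" using bij bij_is_inj by blast
  have fixS: "\<forall>a\<in>S. \<pi> a = a" using fixT ST by blast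
  have fixinv: "\<forall>a\<in>S. inv \<pi> a = a" using fixS inv_fix[OF bij] by blast
  have bijinv: "bij (inv \<pi>)" using bij by (simp add: bij_imp_bij_inv)
  have C1: "act \<pi> y \<in> CC R T (act \<pi> x)" if "y \<in> CC R T x" for y
  proof -
    have "(act \<pi> x, act \<pi> y) \<in> R" using that R_inv[OF supp bij fixS] by (auto simp: CC_def)
    moreover have "set (atl (act \<pi> y)) \<subseteq> set (atl (act \<pi> x)) \<union> T"
      using that fixT by (auto simp: CC_def atl_act)
    ultimately show ?thesis by (simp add: CC_def)
  qed
  have C2: "\<exists>z\<in>CC R T x. z' = act \<pi> z" if "z' \<in> CC R T (act \<pi> x)" for z'
  proof
    let ?z = "act (inv \<pi>) z'"
    show "z' = act \<pi> ?z" using act_inv2[OF bij] by simp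
    have "(act (inv \<pi>) (act \<pi> x), ?z) \<in> R"
      using that R_inv[OF supp bijinv fixinv] by (auto simp: CC_def)
    then have "(x, ?z) \<in> R" using act_inv1[OF bij] by simp
    moreover have "set (atl ?z) \<subseteq> set (atl x) \<union> T"
    proof
      fix a assume "a \<in> set (atl ?z)"
      then obtain b where b: "b \<in> set (atl z')" "a = inv \<pi> b" by (auto simp: atl_act)
      then have "b \<in> \<pi> ` set (atl x) \<union> T" using that by (auto simp: CC_def atl_act)
      then show "a \<in> set (atl x) \<union> T"
        using b inv_fix[OF bij] fixT inv_f_f[OF inj] by auto
    qed
    ultimately show "?z \<in> CC R T x" by (simp add: CC_def)
  qed
  have E: "enc T (act \<pi> x) (act \<pi> y) = enc T x y" if "y \<in> CC R T x" for y
  proof -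
    have "act (gT T (act \<pi> x) \<circ> \<pi>) y = act (gT T x) y"
    proof (rule act_cong)
      fix a assume a: "a \<in> set (atl y)"
      show "(gT T (act \<pi> x) \<circ> \<pi>) a = gT T x a"
      proof (cases "a \<in> T")
        case True then show ?thesis using fixT by (simp add: gT_def)
      next
        case False
        have "\<pi> a \<notin> T" using False fixT inj by (metis injD)
        then show ?thesis using False code_act[OF inj] by (simp add: gT_def)
      qed
    qed
    then show ?thesis by (simp add: enc_def act_comp)
  qed
  have P: "PP R T x (fsel R T x)" using fsel_PP[OF ne] .
  have "PP R T (act \<pi> x) (act \<pi> (fsel R T x))"
    unfolding PP_def
  proof (intro conjI ballI)
    show "act \<pi> (fsel R T x) \<in> CC R T (act \<pi> x)" using C1 P PP_def by blast
    fix z' assume "z' \<in> CC R T (act \<pi> x)"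
    then obtain z where z: "z \<in> CC R T x" "z' = act \<pi> z" using C2 by blast
    show "enc T (act \<pi> x) (act \<pi> (fsel R T x)) \<le> enc T (act \<pi> x) z'"
      using E z P PP_def by auto
  qed
  moreover have "CC R T (act \<pi> x) \<noteq> {}" using C1 ne by blast
  ultimately show ?thesis unfolding fsel_def using PP_unique by (metis the1_equality)
qed


theorem mainTheorem9:
  fixes X Y :: pof and R :: "(val \<times> val) set"
  assumes "R \<subseteq> elems X \<times> elems Y"
    and "fin_supp R"
    and "\<forall>x\<in>elems X. \<exists>y. (x, y) \<in> R"
  shows "\<exists>f. (\<forall>x\<in>elems X. f x \<in> elems Y \<and> (x, f x) \<in> R)
             \<and> fin_supp (graph_on (elems X) f)"
proof -
  obtain S where fS: "finite S" and supp: "supports S R" using assms(2) fin_supp_def by blast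
  define m where "m = Suc (Max (insert 0 S))"
  define F where "F = {m..<m + (sz X + sz Y)}"
  have FS: "F \<inter> S = {}"
  proof -
    have "s < m" if "s \<in> S" for s using that fS by (simp add: m_def le_imp_less_Suc)
    then show ?thesis
    proof -
      assume *: "\<And>s. s \<in> S \<Longrightarrow> s < m"
      show ?thesis
      proof (rule equals0I)
        fix s assume s: "s \<in> F \<inter> S"
        then have "m \<le> s" by (simp add: F_def)
        moreover have "s < m" using * s by blast
        ultimately show False by simp
      qed
    qed
  qed
  have fF: "finite F" and cF: "card F = sz X + sz Y" by (auto simp: F_def)
  define T where "T = S \<union> F"
  have ne: "CC R T x \<noteq> {}" if x: "x \<in> elems X" for x
  proof -
    obtain y where xy: "(x, y) \<in> R" using assms(3) x by blast
    then have yY: "y \<in> elems Y" using assms(1) by blast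
    define D where "D = set (atl x) \<union> S"
    define A where "A = F - set (atl x)"
    have AD: "A \<inter> D = {}" using FS by (auto simp: A_def D_def)
    have fA: "finite A" using fF by (simp add: A_def)
    have "card F \<le> card A + card (set (atl x))"
    proof -
      have "card F \<le> card (A \<union> set (atl x))" by (rule card_mono) (auto simp: A_def fF)
      also have "\<dots> \<le> card A + card (set (atl x))" by (rule card_Un_le)
      finally show ?thesis .
    qed
    then have cA: "card A \<ge> sz Y" using card_atl[OF x] cF by linarith
    let ?Y0 = "set (atl y)"
    have "card (?Y0 - (D \<union> A)) + card (?Y0 \<inter> A) = card ((?Y0 - (D \<union> A)) \<union> (?Y0 \<inter> A))"
      by (rule card_Un_disjoint[symmetric]) auto
    also have "\<dots> \<le> card ?Y0" by (rule card_mono) auto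
    also have "\<dots> \<le> sz Y" using card_atl[OF yY] .
    finally have c1: "card (?Y0 - (D \<union> A)) + card (?Y0 \<inter> A) \<le> card A" using cA by linarith
    have "card (A - ?Y0) = card A - card (A \<inter> ?Y0)" using fA by (simp add: card_Diff_subset_Int)
    then have "card (?Y0 - (D \<union> A)) \<le> card (A - ?Y0)" using c1 by (simp add: Int_commute)
    moreover have SD: "S \<subseteq> D" and xD: "set (atl x) \<subseteq> D" by (auto simp: D_def)
    ultimately obtain y' where "(x, y') \<in> R" "set (atl y') \<subseteq> D \<union> A"
      using rename[OF supp fA AD SD xD xy] by blast
    moreover have "D \<union> A \<subseteq> set (atl x) \<union> T" by (auto simp: D_def A_def T_def)
    ultimately show ?thesis by (auto simp: CC_def)
  qed
  define f where "f = fsel R T"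
  have P: "PP R T x (f x)" if "x \<in> elems X" for x using fsel_PP[OF ne[OF that]] f_def by simp
  have 1: "\<forall>x\<in>elems X. f x \<in> elems Y \<and> (x, f x) \<in> R"
    using P assms(1) by (auto simp: PP_def CC_def)
  have "supports T (graph_on (elems X) f)"
    unfolding supports_def
  proof (intro allI impI)
    fix \<pi> assume h: "bij \<pi> \<and> (\<forall>a\<in>T. \<pi> a = a)"
    then have bij: "bij \<pi>" and fixT: "\<forall>a\<in>T. \<pi> a = a" by auto
    have eq: "f (act \<pi> x) = act \<pi> (f x)" if "x \<in> elems X" for x
      unfolding f_def using equivar[OF supp _ bij fixT ne[OF that]] by (auto simp: T_def)
    show "act_set \<pi> (graph_on (elems X) f) = graph_on (elems X) f"
    proof
      show "act_set \<pi> (graph_on (elems X) f) \<subseteq> graph_on (elems X) f"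
      proof
        fix p assume "p \<in> act_set \<pi> (graph_on (elems X) f)"
        then obtain x where x: "x \<in> elems X" "p = (act \<pi> x, act \<pi> (f x))"
          unfolding act_set_def graph_on_def by auto
        then have "p = (act \<pi> x, f (act \<pi> x))" using eq by simp
        moreover have "act \<pi> x \<in> elems X" using x act_elems by blast
        ultimately show "p \<in> graph_on (elems X) f" unfolding graph_on_def by blast
      qed
    next
      show "graph_on (elems X) f \<subseteq> act_set \<pi> (graph_on (elems X) f)"
      proof
        fix p assume "p \<in> graph_on (elems X) f"
        then obtain x' where x': "x' \<in> elems X" "p = (x', f x')" by (auto simp: graph_on_def)
        define x where "x = act (inv \<pi>) x'"
        have x: "x \<in> elems X" using x' act_elems by (simp add: x_def)
        have ax: "act \<pi> x = x'" using act_inv2[OF bij] by (simp add: x_def)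
        have peq: "p = (act \<pi> x, act \<pi> (f x))" using x' ax eq[OF x] by simp
        show "p \<in> act_set \<pi> (graph_on (elems X) f)"
        proof -
          have "(x, f x) \<in> graph_on (elems X) f" using x unfolding graph_on_def by blast
          then show ?thesis unfolding act_set_def peq by (rule rev_image_eqI) simp
        qed
      qed
    qed
  qed
  then have "fin_supp (graph_on (elems X) f)"
    using fS fF unfolding fin_supp_def T_def by blast
  with 1 show ?thesis by blast
qed

end
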